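(* Let $G$ be a countably based profinite group with normalised Haar measure $\mu$, let $x\in G$, and let $(N_i)_{i\geq1}$ be a descending chain of open normal subgroups of $G$ with $\bigcap_i N_i=1$. Define $c_1(x)=\sup_{i\geq1}|C_{G/N_i}(xN_i)|$, $c_2(x)=\sup_{N\trianglelefteq_o G}|C_{G/N}(xN)|$, and $c_3(x)=\sup_{K\trianglelefteq G}|C_{G/K}(xK)|$ (with $K$ ranging over closed normal subgroups, and $c_3(x)=\infty$ if some $C_{G/K}(xK)$ is infinite). Then $c_1(x)=c_2(x)=c_3(x)=:c(x)$ and $\mu(x^G)=1/c(x)$ (interpreted as $0$ if $c(x)=\infty$), where $x^G=\{g^{-1}xg: g\in G\}$.
   Context: $N\trianglelefteq_o G$ means $N$ is an open normal subgroup of $G$. *)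

theory Defs
  imports "HOL-Analysis.Analysis" "HOL-Probability.Probability" "HOL-Algebra.Algebra"
begin

definition topological_group :: "('a, 'b) monoid_scheme \<Rightarrow> 'a topology \<Rightarrow> bool" where
  "topological_group G T \<longleftrightarrow> group G \<and> topspace T = carrier G \<and>
     continuous_map (prod_topology T T) T (\<lambda>(x, y). x \<otimes>\<^bsub>G\<^esub> y) \<and>
     continuous_map T T (\<lambda>x. inv\<^bsub>G\<^esub> x)"

definition totally_disconnected_space :: "'a topology \<Rightarrow> bool" where
  "totally_disconnected_space T \<longleftrightarrow>
     (\<forall>x \<in> topspace T. connected_component_of_set T x = {x})"

definition profinite_group :: "('a, 'b) monoid_scheme \<Rightarrow> 'a topology \<Rightarrow> bool" where
  "profinite_group G T \<longleftrightarrow> topological_group G T \<and> compact_space T \<and>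
     Hausdorff_space T \<and> totally_disconnected_space T"

definition borel_sets_of :: "'a topology \<Rightarrow> 'a set set" where
  "borel_sets_of T = sigma_sets (topspace T) {U. openin T U}"

definition normalised_haar_measure :: "('a, 'b) monoid_scheme \<Rightarrow> 'a topology \<Rightarrow> 'a measure \<Rightarrow> bool" where
  "normalised_haar_measure G T M \<longleftrightarrow> prob_space M \<and> space M = carrier G \<and>
     sets M = borel_sets_of T \<and>
     (\<forall>g \<in> carrier G. \<forall>A \<in> sets M. measure M (g <#\<^bsub>G\<^esub> A) = measure M A)"

definition centraliser :: "('c, 'd) monoid_scheme \<Rightarrow> 'c \<Rightarrow> 'c set" where
  "centraliser H y = {z \<in> carrier H. z \<otimes>\<^bsub>H\<^esub> y = y \<otimes>\<^bsub>H\<^esub> z}"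

definition ecard :: "'c set \<Rightarrow> enat" where
  "ecard S = (if finite S then enat (card S) else \<infinity>)"

definition quot_centraliser_card :: "('a, 'b) monoid_scheme \<Rightarrow> 'a set \<Rightarrow> 'a \<Rightarrow> enat" where
  "quot_centraliser_card G K x = ecard (centraliser (G Mod K) (K #>\<^bsub>G\<^esub> x))"

definition conj_class :: "('a, 'b) monoid_scheme \<Rightarrow> 'a \<Rightarrow> 'a set" where
  "conj_class G x = {inv\<^bsub>G\<^esub> g \<otimes>\<^bsub>G\<^esub> x \<otimes>\<^bsub>G\<^esub> g | g. g \<in> carrier G}"

end

theory Submission
  imports Defs
begin

lemma conj_eq_iff:
  fixes Q (structure)
  assumes "group Q" "u \<in> carrier Q" "q \<in> carrier Q" "q0 \<in> carrier Q"
  shows "(inv\<^bsub>Q\<^esub> q \<otimes>\<^bsub>Q\<^esub> u \<otimes>\<^bsub>Q\<^esub> q = inv\<^bsub>Q\<^esub> q0 \<otimes>\<^bsub>Q\<^esub> u \<otimes>\<^bsub>Q\<^esub> q0)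
     \<longleftrightarrow> (q \<otimes>\<^bsub>Q\<^esub> inv\<^bsub>Q\<^esub> q0) \<otimes>\<^bsub>Q\<^esub> u = u \<otimes>\<^bsub>Q\<^esub> (q \<otimes>\<^bsub>Q\<^esub> inv\<^bsub>Q\<^esub> q0)"
proof -
  interpret group Q by fact
  have "(inv q \<otimes> u \<otimes> q = inv q0 \<otimes> u \<otimes> q0) \<longleftrightarrow> q \<otimes> (inv q \<otimes> u \<otimes> q) \<otimes> inv q0 = q \<otimes> (inv q0 \<otimes> u \<otimes> q0) \<otimes> inv q0"
    using assms by (metis l_cancel r_cancel m_closed inv_closed)
  also have "q \<otimes> (inv q \<otimes> u \<otimes> q) \<otimes> inv q0 = u \<otimes> (q \<otimes> inv q0)"
    using assms by (simp add: m_assoc[symmetric])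
  also have "q \<otimes> (inv q0 \<otimes> u \<otimes> q0) \<otimes> inv q0 = (q \<otimes> inv q0) \<otimes> u"
    using assms by (simp add: m_assoc)
  finally show ?thesis by auto
qed

lemma fiber_card:
  fixes Q (structure)
  assumes "group Q" "u \<in> carrier Q" "q0 \<in> carrier Q"
  shows "card {q \<in> carrier Q. inv\<^bsub>Q\<^esub> q \<otimes>\<^bsub>Q\<^esub> u \<otimes>\<^bsub>Q\<^esub> q = inv\<^bsub>Q\<^esub> q0 \<otimes>\<^bsub>Q\<^esub> u \<otimes>\<^bsub>Q\<^esub> q0}
       = card (centraliser Q u)"
proof -
  interpret group Q by fact
  have "bij_betw (\<lambda>q. q \<otimes> inv q0) {q \<in> carrier Q. inv q \<otimes> u \<otimes> q = inv q0 \<otimes> u \<otimes> q0} (centraliser Q u)"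
  proof (rule bij_betw_byWitness[where f' = "\<lambda>c. c \<otimes> q0"])
    show "\<forall>a\<in>{q \<in> carrier Q. inv q \<otimes> u \<otimes> q = inv q0 \<otimes> u \<otimes> q0}. a \<otimes> inv q0 \<otimes> q0 = a"
      using assms by (auto simp: m_assoc)
    show "\<forall>a'\<in>centraliser Q u. a' \<otimes> q0 \<otimes> inv q0 = a'"
      using assms by (auto simp: m_assoc centraliser_def)
    show "(\<lambda>q. q \<otimes> inv q0) ` {q \<in> carrier Q. inv q \<otimes> u \<otimes> q = inv q0 \<otimes> u \<otimes> q0} \<subseteq> centraliser Q u"
      using assms conj_eq_iff[OF assms(1,2) _ assms(3)] by (auto simp: centraliser_def)
    show "(\<lambda>c. c \<otimes> q0) ` centraliser Q u \<subseteq> {q \<in> carrier Q. inv q \<otimes> u \<otimes> q = inv q0 \<otimes> u \<otimes> q0}"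
    proof
      fix q assume "q \<in> (\<lambda>c. c \<otimes> q0) ` centraliser Q u"
      then obtain c where c: "c \<in> carrier Q" "c \<otimes> u = u \<otimes> c" "q = c \<otimes> q0"
        by (auto simp: centraliser_def)
      have "q \<otimes> inv q0 = c" using c assms by (simp add: m_assoc)
      then show "q \<in> {q \<in> carrier Q. inv q \<otimes> u \<otimes> q = inv q0 \<otimes> u \<otimes> q0}"
        using c assms conj_eq_iff[OF assms(1,2) _ assms(3), of q] by auto
    qed
  qed
  then show ?thesis by (rule bij_betw_same_card)
qed

lemma fiber_card_le:
  fixes Q (structure)
  assumes "group Q" "finite (carrier Q)" "u \<in> carrier Q"
  shows "card {q \<in> carrier Q. inv q \<otimes> u \<otimes> q = y} \<le> card (centraliser Q u)"
proof (cases "{q \<in> carrier Q. inv q \<otimes> u \<otimes> q = y} = {}")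
  case True then show ?thesis by (metis card.empty le0)
next
  case False
  then obtain q0 where q0: "q0 \<in> carrier Q" "y = inv q0 \<otimes> u \<otimes> q0" by auto
  show ?thesis using fiber_card[OF assms(1,3) q0(1)] q0 by simp
qed

lemma class_card:
  fixes Q (structure)
  assumes "group Q" "finite (carrier Q)" "u \<in> carrier Q"
  shows "card (carrier Q) = card (conj_class Q u) * card (centraliser Q u)"
proof -
  interpret group Q by fact
  define F where "F y = {q \<in> carrier Q. inv q \<otimes> u \<otimes> q = y}" for y
  have cu: "carrier Q = (\<Union>y\<in>conj_class Q u. F y)"
    by (auto simp: F_def conj_class_def)
  have fin: "finite (conj_class Q u)"
  proof -
    have "conj_class Q u = (\<lambda>g. inv g \<otimes> u \<otimes> g) ` carrier Q" by (auto simp: conj_class_def)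
    then show ?thesis using assms(2) by simp
  qed
  have "card (carrier Q) = (\<Sum>y\<in>conj_class Q u. card (F y))"
    unfolding cu
    by (rule card_UN_disjoint[OF fin]) (auto simp: F_def intro: finite_subset[OF _ assms(2)])
  also have "\<dots> = (\<Sum>y\<in>conj_class Q u. card (centraliser Q u))"
  proof (rule sum.cong[OF refl])
    fix y assume "y \<in> conj_class Q u"
    then obtain q0 where "q0 \<in> carrier Q" "y = inv q0 \<otimes> u \<otimes> q0" by (auto simp: conj_class_def)
    then show "card (F y) = card (centraliser Q u)"
      unfolding F_def using fiber_card[OF assms(1,3)] by simp
  qed
  finally show ?thesis by simp
qed

lemma preimage_card_le:
  fixes Q (structure)
  assumes "group Q" "finite (carrier Q)" "u \<in> carrier Q" "finite Y"
  shows "card {q \<in> carrier Q. inv q \<otimes> u \<otimes> q \<in> Y} \<le> card Y * card (centraliser Q u)"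
proof -
  define F where "F y = {q \<in> carrier Q. inv q \<otimes> u \<otimes> q = y}" for y
  have "{q \<in> carrier Q. inv q \<otimes> u \<otimes> q \<in> Y} = (\<Union>y\<in>Y. F y)" by (auto simp: F_def)
  then have "card {q \<in> carrier Q. inv q \<otimes> u \<otimes> q \<in> Y} \<le> (\<Sum>y\<in>Y. card (F y))"
    using card_UN_le[OF assms(4)] by simp
  also have "\<dots> \<le> (\<Sum>y\<in>Y. card (centraliser Q u))"
    by (rule sum_mono) (use fiber_card_le[OF assms(1-3)] in \<open>simp add: F_def\<close>)
  finally show ?thesis by simp
qed

lemma quot_count:
  fixes Q (structure)
  assumes "group Q" "finite (carrier Q)" "H \<lhd> Q" "u \<in> carrier Q" "D \<subseteq> carrier Q"
    and cd: "\<forall>d\<in>D. \<exists>h\<in>H. inv d \<otimes> u \<otimes> d = u \<otimes> h"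
    and sep: "\<forall>d\<in>D. \<forall>d'\<in>D. d \<noteq> d' \<longrightarrow> d \<otimes> inv d' \<notin> H"
  shows "card D \<le> card (centraliser Q u)"
proof -
  interpret normal H Q by fact
  have Hsub: "H \<subseteq> carrier Q" by (rule subset)
  have finH: "finite H" using Hsub assms(2) finite_subset by blast
  have finD: "finite D" using assms(5) assms(2) finite_subset by blast
  define S where "S = {q \<in> carrier Q. inv q \<otimes> u \<otimes> q \<in> u <# H}"
  have sub: "H #> d \<subseteq> S" if d: "d \<in> D" for d
  proof
    fix q assume "q \<in> H #> d"
    then obtain h where h: "h \<in> H" "q = h \<otimes> d" unfolding r_coset_def by blast
    have dc: "d \<in> carrier Q" using d assms(5) by blast
    have hc: "h \<in> carrier Q" using h Hsub by blast
    obtain h1 where h1: "h1 \<in> H" "inv d \<otimes> u \<otimes> d = u \<otimes> h1" using cd d by blast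
    define w where "w = inv u \<otimes> inv h \<otimes> u"
    have wH: "w \<in> H" unfolding w_def using inv_op_closed1[OF assms(4)] h by simp
    have wc: "w \<in> carrier Q" using wH Hsub by blast
    have h1c: "h1 \<in> carrier Q" using h1 Hsub by blast
    have e1: "inv h \<otimes> u = u \<otimes> w" unfolding w_def using hc assms(4) by (simp add: m_assoc[symmetric])
    define h2 where "h2 = inv d \<otimes> (w \<otimes> h) \<otimes> d"
    have h2H: "h2 \<in> H" unfolding h2_def using inv_op_closed1[OF dc] wH h by simp
    have h2c: "h2 \<in> carrier Q" using h2H Hsub by blast
    have "inv q \<otimes> u \<otimes> q = inv d \<otimes> (inv h \<otimes> u) \<otimes> h \<otimes> d"
      using h hc dc assms(4) by (simp add: inv_mult_group m_assoc)
    also have "\<dots> = inv d \<otimes> u \<otimes> w \<otimes> h \<otimes> d" using e1 hc dc wc assms(4) by (simp add: m_assoc)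
    also have "\<dots> = (inv d \<otimes> u \<otimes> d) \<otimes> h2" unfolding h2_def
      using hc dc wc assms(4) by (simp add: m_assoc r_inv_ex inv_closed flip: m_assoc[of d "inv d"])
    also have "\<dots> = u \<otimes> (h1 \<otimes> h2)" using h1 h1c h2c assms(4) by (simp add: m_assoc)
    finally have "inv q \<otimes> u \<otimes> q = u \<otimes> (h1 \<otimes> h2)" .
    moreover have "h1 \<otimes> h2 \<in> H" using h1 h2H by simp
    moreover have "q \<in> carrier Q" using h hc dc by simp
    ultimately show "q \<in> S" unfolding S_def l_coset_def by blast
  qed
  have disj: "(H #> d) \<inter> (H #> d') = {}" if "d \<in> D" "d' \<in> D" "d \<noteq> d'" for d d'
  proof (rule ccontr)
    assume "(H #> d) \<inter> (H #> d') \<noteq> {}"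
    moreover have "H #> d \<in> rcosets H" "H #> d' \<in> rcosets H"
      using that assms(5) Hsub by (auto intro: rcosetsI)
    ultimately have "H #> d = H #> d'"
      using rcos_disjoint[OF subgroup_axioms] unfolding pairwise_def disjnt_def by blast
    then have "d \<in> H #> d'" using rcos_self[OF _ subgroup_axioms] that assms(5) by auto
    then have "d \<otimes> inv d' \<in> H" using rcos_module_imp[OF is_group] that assms(5) by blast
    then show False using sep that by blast
  qed
  have "card (\<Union>d\<in>D. H #> d) = (\<Sum>d\<in>D. card (H #> d))"
    by (rule card_UN_disjoint[OF finD]) (use disj in \<open>auto intro: finite_subset[OF _ assms(2)] r_coset_subset_G[OF Hsub] dest: subsetD[OF assms(5)]\<close>,
       meson assms(2,5) Hsub finite_subset r_coset_subset_G subsetD)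
  also have "\<dots> = (\<Sum>d\<in>D. card H)"
    by (rule sum.cong[OF refl]) (metis card_rcosets_equal Hsub rcosetsI subsetD[OF assms(5)])
  finally have c1: "card (\<Union>d\<in>D. H #> d) = card D * card H" by simp
  have finS: "finite S" unfolding S_def using assms(2) by simp
  have "card (\<Union>d\<in>D. H #> d) \<le> card S" using sub by (intro card_mono[OF finS]) auto
  also have "card S \<le> card (u <# H) * card (centraliser Q u)"
    unfolding S_def
    by (rule preimage_card_le[OF assms(1,2,4)]) (metis coset_eq assms(4) finH rcosets_finite rcosetsI Hsub)
  also have "card (u <# H) = card H"
    by (metis coset_eq assms(4) card_rcosets_equal rcosetsI Hsub)
  finally have "card D * card H \<le> card H * card (centraliser Q u)" using c1 by simp
  moreover have "card H > 0" using finH subgroup.one_closed[OF subgroup_axioms] card_gt_0_iff by blast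
  ultimately show ?thesis by (simp add: mult.commute)
qed

locale tgrp = group G for G (structure) +
  fixes T :: "'a topology"
  assumes top: "topspace T = carrier G"
    and cmul: "continuous_map (prod_topology T T) T (\<lambda>(x, y). x \<otimes> y)"
    and cinv: "continuous_map T T (\<lambda>x. inv x)"
begin

lemma cont_mul2:
  assumes "continuous_map T T f" "continuous_map T T g"
  shows "continuous_map T T (\<lambda>z. f z \<otimes> g z)"
  using continuous_map_compose[OF continuous_map_pairedI[OF assms] cmul] by (simp add: o_def)

lemma cont_id: "continuous_map T T (\<lambda>z. z)"
  using continuous_map_id by (simp add: id_def)

lemma cont_const: "a \<in> carrier G \<Longrightarrow> continuous_map T T (\<lambda>z. a)"
  by (simp add: top)

lemma cont_inv2: "continuous_map T T f \<Longrightarrow> continuous_map T T (\<lambda>z. inv (f z))"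
  using continuous_map_compose[OF _ cinv] by (simp add: o_def)

lemma cont_conj: "x \<in> carrier G \<Longrightarrow> continuous_map T T (\<lambda>g. inv g \<otimes> x \<otimes> g)"
  by (intro cont_mul2 cont_inv2 cont_id cont_const)

lemma rcos_eq_preimage:
  assumes "subgroup N G" "g \<in> carrier G"
  shows "N #> g = {z \<in> topspace T. z \<otimes> inv g \<in> N}"
  using subgroup.rcos_module[OF assms(1) is_group assms(2)] assms top
    subgroup.elemrcos_carrier[OF assms(1) is_group assms(2)] by auto

lemma open_rcos:
  assumes "subgroup N G" "openin T N" "g \<in> carrier G"
  shows "openin T (N #> g)"
  unfolding rcos_eq_preimage[OF assms(1,3)]
  by (rule openin_continuous_map_preimage[OF cont_mul2[OF cont_id cont_const] assms(2)]) (use assms in simp)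

lemma closed_rcos:
  assumes "subgroup N G" "closedin T N" "g \<in> carrier G"
  shows "closedin T (N #> g)"
  unfolding rcos_eq_preimage[OF assms(1,3)]
  by (rule closedin_continuous_map_preimage[OF cont_mul2[OF cont_id cont_const] assms(2)]) (use assms in simp)

lemma open_subgroup_closed:
  assumes "subgroup N G" "openin T N"
  shows "closedin T N"
proof -
  have "topspace T - N = \<Union>{N #> g | g. g \<in> carrier G \<and> g \<notin> N}"
  proof
    show "topspace T - N \<subseteq> \<Union>{N #> g | g. g \<in> carrier G \<and> g \<notin> N}"
      using rcos_self[OF _ assms(1)] top by blast
    show "\<Union>{N #> g | g. g \<in> carrier G \<and> g \<notin> N} \<subseteq> topspace T - N"
    proof
      fix z assume "z \<in> \<Union>{N #> g | g. g \<in> carrier G \<and> g \<notin> N}"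
      then obtain g where z: "z \<in> N #> g" and g: "g \<in> carrier G" "g \<notin> N" by blast
      have zc: "z \<in> carrier G" using subgroup.elemrcos_carrier[OF assms(1) is_group g(1) z] .
      have "z \<notin> N"
      proof
      assume "z \<in> N"
      have "z \<otimes> inv g \<in> N" using subgroup.rcos_module_imp[OF assms(1) is_group g(1) z] .
      then have "inv z \<otimes> (z \<otimes> inv g) \<in> N" using \<open>z \<in> N\<close> assms(1) by (simp add: subgroup.m_closed subgroup.m_inv_closed)
      then have "inv g \<in> N" using zc g by (simp add: m_assoc[symmetric])
      then have "inv (inv g) \<in> N" using assms(1) by (simp add: subgroup.m_inv_closed)
      then show False using g by simp
      qed
      then show "z \<in> topspace T - N" using zc top by simp
    qed
  qed
  moreover have "openin T (\<Union>{N #> g | g. g \<in> carrier G \<and> g \<notin> N})"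
    using open_rcos[OF assms] by (intro openin_Union) auto
  ultimately show ?thesis
    using assms top by (simp add: closedin_def subgroup.subset)
qed

lemma finite_index:
  assumes "compact_space T" "subgroup N G" "openin T N"
  shows "finite (rcosets N)"
proof -
  have "compactin T (topspace T)" using assms(1) compact_space_def by blast
  moreover have "\<forall>U\<in>rcosets N. openin T U" using open_rcos[OF assms(2,3)] by (auto simp: RCOSETS_def)
  moreover have "topspace T \<subseteq> \<Union>(rcosets N)" using rcosets_part_G[OF assms(2)] top by simp
  ultimately obtain V where V: "finite V" "V \<subseteq> rcosets N" "topspace T \<subseteq> \<Union>V"
    unfolding compactin_def by meson
  have "rcosets N \<subseteq> V"
  proof
    fix R assume R: "R \<in> rcosets N"
    then obtain g where g: "g \<in> carrier G" "R = N #> g" by (auto simp: RCOSETS_def)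
    then have "g \<in> R" using rcos_self[OF _ assms(2)] by simp
    then obtain R' where "R' \<in> V" "g \<in> R'" using V(3) g top by blast
    then have "R' = R" using rcos_disjoint[OF assms(2)] V(2) R \<open>g \<in> R\<close>
      unfolding pairwise_def disjnt_def by blast
    then show "R \<in> V" using \<open>R' \<in> V\<close> by simp
  qed
  then show ?thesis using V(1) finite_subset by blast
qed

end

lemma profinite_tgrp: "profinite_group G T \<Longrightarrow> tgrp G T"
  unfolding profinite_group_def topological_group_def tgrp_def tgrp_axioms_def by auto

lemma r_coset_mono: "A \<subseteq> B \<Longrightarrow> A #>\<^bsub>G\<^esub> y \<subseteq> B #>\<^bsub>G\<^esub> y"
  unfolding r_coset_def by auto

locale chain_setting = tgrp +
  fixes N :: "nat \<Rightarrow> 'a set"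
  assumes cpt: "compact_space T" and haus: "Hausdorff_space T"
    and Nn: "\<And>i. i \<ge> 1 \<Longrightarrow> N i \<lhd> G"
    and Nopen: "\<And>i. i \<ge> 1 \<Longrightarrow> openin T (N i)"
    and Ndec: "\<And>i. i \<ge> 1 \<Longrightarrow> N (Suc i) \<subseteq> N i"
    and Nint: "(\<Inter>i\<in>{1..}. N i) = {\<one>}"
begin

lemma Nsub: "i \<ge> 1 \<Longrightarrow> subgroup (N i) G"
  using Nn normal_imp_subgroup by blast

lemma Nmono: assumes "1 \<le> i" "i \<le> j" shows "N j \<subseteq> N i"
  using assms(2)
proof (induction j rule: dec_induct)
  case (step n) then show ?case using Ndec[of n] assms(1) by auto
qed simp

lemma Nclosed: "i \<ge> 1 \<Longrightarrow> closedin T (N i)"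
  using open_subgroup_closed Nsub Nopen by blast

lemma key:
  assumes A: "closedin T A" and y: "y \<in> carrier G"
    and ne: "\<And>i. i \<ge> 1 \<Longrightarrow> (N i #> y) \<inter> A \<noteq> {}"
  shows "y \<in> A"
proof -
  define C where "C n = (N (Suc n) #> y) \<inter> A" for n
  have "(\<Inter>n. C n) \<noteq> {}"
  proof (rule compact_space_imp_nest[OF cpt])
    show "closedin T (C n)" for n
      unfolding C_def by (intro closedin_Int A closed_rcos Nsub Nclosed y) auto
    show "C n \<noteq> {}" for n unfolding C_def using ne by simp
    show "decseq C"
      unfolding decseq_def C_def using Nmono r_coset_mono by (metis Int_mono Suc_le_mono le_add1 order_refl plus_1_eq_Suc)
  qed
  then obtain z where z: "\<And>n. z \<in> C n" by blast
  have zA: "z \<in> A" using z[of 0] by (simp add: C_def)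
  have "z \<otimes> inv y \<in> N i" if "i \<ge> 1" for i
  proof -
    have "z \<in> N i #> y" using z[of "i - 1"] that by (simp add: C_def)
    then show ?thesis using subgroup.rcos_module_imp[OF Nsub[OF that] is_group y] by blast
  qed
  then have "z \<otimes> inv y = \<one>" using Nint by blast
  moreover have zc: "z \<in> carrier G" using zA A closedin_subset top by blast
  ultimately have "z = y" using y by (metis inv_closed inv_equality inv_inv)
  then show ?thesis using zA by simp
qed

lemma key':
  assumes A: "closedin T A" and y: "y \<in> carrier G" "y \<notin> A"
  shows "\<exists>i\<ge>1. \<forall>j\<ge>i. (N j #> y) \<inter> A = {}"
proof -
  obtain i where i: "i \<ge> 1" "(N i #> y) \<inter> A = {}" using key[OF A y(1)] y(2) by blast
  have "(N j #> y) \<inter> A = {}" if "j \<ge> i" for j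
    using r_coset_mono[OF Nmono[OF i(1) that], of G y] i(2) by blast
  then show ?thesis using i(1) by blast
qed

end

lemma ecard_le:
  assumes "\<And>F. finite F \<Longrightarrow> F \<subseteq> S \<Longrightarrow> enat (card F) \<le> c"
  shows "ecard S \<le> c"
proof (cases "finite S")
  case True then show ?thesis using assms[of S] by (simp add: ecard_def)
next
  case False
  have "enat n \<le> c" for n
  proof -
    obtain F where "F \<subseteq> S" "finite F" "card F = n" using infinite_arbitrarily_large[OF False] by blast
    then show ?thesis using assms by blast
  qed
  then have "c = \<infinity>"
  proof (cases c)
    case (enat k) then show ?thesis using \<open>\<And>n. enat n \<le> c\<close>[of "Suc k"] by simp
  qed simp
  then show ?thesis by simp
qed

lemma (in tgrp) quot_finite:
  assumes "compact_space T" "M \<lhd> G" "openin T M"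
  shows "finite (carrier (G Mod M))"
  using finite_index[OF assms(1) normal_imp_subgroup[OF assms(2)] assms(3)] by (simp add: FactGroup_def)

lemma qcc_enat:
  assumes "finite (carrier (G Mod M))"
  shows "quot_centraliser_card G M x = enat (card (centraliser (G Mod M) (M #>\<^bsub>G\<^esub> x)))"
proof -
  have "centraliser (G Mod M) (M #>\<^bsub>G\<^esub> x) \<subseteq> carrier (G Mod M)" by (auto simp: centraliser_def)
  then show ?thesis using assms finite_subset unfolding quot_centraliser_card_def ecard_def by auto
qed

context chain_setting
begin

lemma c3_le:
  assumes K: "K \<lhd> G" "closedin T K" and x: "x \<in> carrier G"
  shows "quot_centraliser_card G K x \<le> (SUP i\<in>{1..}. quot_centraliser_card G (N i) x)"
  unfolding quot_centraliser_card_def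
proof (rule ecard_le)
  fix F assume F: "finite F" "F \<subseteq> centraliser (G Mod K) (K #> x)"
  interpret K: normal K G by (rule K(1))
  define rep where "rep R = (SOME g. g \<in> carrier G \<and> R = K #> g)" for R
  have rep: "rep R \<in> carrier G \<and> R = K #> rep R" if "R \<in> F" for R
  proof -
    have "R \<in> carrier (G Mod K)" using that F(2) by (auto simp: centraliser_def)
    then have "\<exists>g. g \<in> carrier G \<and> R = K #> g" by (auto simp: FactGroup_def RCOSETS_def)
    then show ?thesis unfolding rep_def by (rule someI_ex)
  qed
  have repc: "rep R \<in> carrier G" if "R \<in> F" for R using rep[OF that] by blast
  have repe: "K #> rep R = R" if "R \<in> F" for R using rep[OF that] by simp
  define P where "P = {(R, R'). R \<in> F \<and> R' \<in> F \<and> R \<noteq> R'}"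
  have "P \<subseteq> F \<times> F" by (auto simp: P_def)
  then have finP: "finite P" using F(1) finite_subset by blast
  define yy where "yy p = rep (fst p) \<otimes> inv rep (snd p)" for p
  have ynK: "yy p \<notin> K \<and> yy p \<in> carrier G" if pP: "p \<in> P" for p
  proof -
    obtain R R' where p: "p = (R, R')" "R \<in> F" "R' \<in> F" "R \<noteq> R'" using pP unfolding P_def by auto
    have yc: "yy p \<in> carrier G" using repc p by (simp add: yy_def)
    moreover have "yy p \<notin> K"
    proof
      assume "yy p \<in> K"
      then have "rep R \<in> K #> rep R'"
        using K.rcos_module_rev[OF is_group, of "rep R'" "rep R"] conjunct1[OF rep[OF p(2)]] conjunct1[OF rep[OF p(3)]]
        by (simp add: yy_def p(1))
      then have "K #> rep R' = K #> rep R" using repr_independence[OF _ _ K.subgroup_axioms] repc p by blast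
      then show False using repe p by metis
    qed
    ultimately show ?thesis by blast
  qed
  have "\<forall>p\<in>P. \<exists>i\<ge>1. \<forall>j\<ge>i. (N j #> yy p) \<inter> K = {}"
    using key'[OF K(2)] ynK by blast
  then obtain ip where ip: "\<And>p. p \<in> P \<Longrightarrow> ip p \<ge> 1 \<and> (\<forall>j\<ge>ip p. (N j #> yy p) \<inter> K = {})"
    using bchoice[of P "\<lambda>p i. i \<ge> 1 \<and> (\<forall>j\<ge>i. (N j #> yy p) \<inter> K = {})"] by blast
  define i0 where "i0 = Max (insert 1 (ip ` P))"
  have i0: "i0 \<ge> 1" unfolding i0_def using finP by simp
  have sepP: "(N i0 #> yy p) \<inter> K = {}" if "p \<in> P" for p
  proof -
    have "ip p \<le> i0" unfolding i0_def using finP that by simp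
    then show ?thesis using ip that by blast
  qed
  define M where "M = N i0"
  interpret M: normal M G unfolding M_def by (rule Nn[OF i0])
  define Q where "Q = G Mod M"
  have gQ: "group Q" unfolding Q_def by (rule M.factorgroup_is_group)
  have finQ: "finite (carrier Q)" unfolding Q_def M_def by (rule quot_finite[OF cpt Nn[OF i0] Nopen[OF i0]])
  define \<rho> where "\<rho> a = M #> a" for a
  have hom: "group_hom G Q \<rho>"
    unfolding group_hom_def group_hom_axioms_def Q_def \<rho>_def
    using M.r_coset_hom_Mod M.factorgroup_is_group is_group by blast
  have surj: "\<rho> ` carrier G = carrier Q" unfolding Q_def \<rho>_def by (simp add: carrier_FactGroup)
  have HQ: "\<rho> ` K \<lhd> Q" by (rule K.surj_hom_normal_subgroup[OF hom surj])
  have sep': "\<rho> (rep R \<otimes> inv rep R') \<noteq> \<rho> k" if "R \<in> F" "R' \<in> F" "R \<noteq> R'" "k \<in> K" for R R' k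
  proof
    assume eq: "\<rho> (rep R \<otimes> inv rep R') = \<rho> k"
    have p: "(R, R') \<in> P" using that P_def by simp
    have kc: "k \<in> carrier G" using that K.subset by blast
    have "k \<in> M #> (rep R \<otimes> inv rep R')"
      using eq repr_independenceD[OF M.subgroup_axioms kc] unfolding \<rho>_def by simp
    then show False using sepP[OF p] that(4) unfolding M_def yy_def by auto
  qed
  define D where "D = \<rho> ` rep ` F"
  have injF: "inj_on (\<rho> \<circ> rep) F"
  proof (rule inj_onI, rule ccontr)
    fix R R' assume RR: "R \<in> F" "R' \<in> F" "(\<rho> \<circ> rep) R = (\<rho> \<circ> rep) R'" "R \<noteq> R'"
    have "\<rho> (rep R \<otimes> inv rep R') = \<rho> (rep R') \<otimes>\<^bsub>Q\<^esub> inv\<^bsub>Q\<^esub> \<rho> (rep R')"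
      using RR repc group_hom.hom_mult[OF hom] group_hom.hom_inv[OF hom] by simp
    also have "\<dots> = \<one>\<^bsub>Q\<^esub>"
      using group_hom.hom_closed[OF hom] repc RR(2) by (intro group.r_inv[OF gQ]) blast
    also have "\<dots> = \<rho> \<one>" using group_hom.hom_one[OF hom] by simp
    finally show False using sep'[OF RR(1,2,4)] K.one_closed by blast
  qed
  have cardD: "card D = card F" unfolding D_def using card_image[OF injF] by (simp add: image_comp)
  have "card D \<le> card (centraliser Q (\<rho> x))"
  proof (rule quot_count[OF gQ finQ HQ])
    show "\<rho> x \<in> carrier Q" by (rule group_hom.hom_closed[OF hom x])
    show "D \<subseteq> carrier Q" unfolding D_def by (auto intro: group_hom.hom_closed[OF hom] repc)
    show "\<forall>d\<in>D. \<exists>h\<in>\<rho> ` K. inv\<^bsub>Q\<^esub> d \<otimes>\<^bsub>Q\<^esub> \<rho> x \<otimes>\<^bsub>Q\<^esub> d = \<rho> x \<otimes>\<^bsub>Q\<^esub> h"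
    proof
      fix d assume "d \<in> D"
      then obtain R where R: "R \<in> F" "d = \<rho> (rep R)" unfolding D_def by auto
      define g where "g = rep R"
      have gc: "g \<in> carrier G" using repc R g_def by blast
      have "R \<otimes>\<^bsub>G Mod K\<^esub> (K #> x) = (K #> x) \<otimes>\<^bsub>G Mod K\<^esub> R"
        using F(2) R(1) by (auto simp: centraliser_def)
      then have "(K #> g) <#> (K #> x) = (K #> x) <#> (K #> g)"
        using repe[OF R(1)] by (simp add: g_def)
      then have "K #> (g \<otimes> x) = K #> (x \<otimes> g)"
        using K.rcos_sum gc x by simp
      then have "x \<otimes> g \<in> K #> (g \<otimes> x)"
        using repr_independenceD[OF K.subgroup_axioms] gc x by simp
      then obtain k' where k': "k' \<in> K" "x \<otimes> g = k' \<otimes> (g \<otimes> x)" unfolding r_coset_def by blast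
      have k'c: "k' \<in> carrier G" using k' K.subset by blast
      define k where "k = inv x \<otimes> (inv g \<otimes> k' \<otimes> g) \<otimes> x"
      have kK: "k \<in> K" unfolding k_def using K.inv_op_closed1 gc x k' by simp
      have "inv g \<otimes> x \<otimes> g = inv g \<otimes> (x \<otimes> g)" using gc x by (simp add: m_assoc)
      also have "\<dots> = (inv g \<otimes> k' \<otimes> g) \<otimes> x" using k' gc x k'c by (simp add: m_assoc)
      also have "\<dots> = x \<otimes> k" unfolding k_def using gc x k'c by (simp add: m_assoc[symmetric])
      finally have e: "inv g \<otimes> x \<otimes> g = x \<otimes> k" .
      have "inv\<^bsub>Q\<^esub> d \<otimes>\<^bsub>Q\<^esub> \<rho> x \<otimes>\<^bsub>Q\<^esub> d = \<rho> (inv g \<otimes> x \<otimes> g)"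
        using R gc x group_hom.hom_mult[OF hom] group_hom.hom_inv[OF hom] unfolding g_def by simp
      also have "\<dots> = \<rho> x \<otimes>\<^bsub>Q\<^esub> \<rho> k" using e group_hom.hom_mult[OF hom] x kK K.subset by auto
      finally show "\<exists>h\<in>\<rho> ` K. inv\<^bsub>Q\<^esub> d \<otimes>\<^bsub>Q\<^esub> \<rho> x \<otimes>\<^bsub>Q\<^esub> d = \<rho> x \<otimes>\<^bsub>Q\<^esub> h" using kK by blast
    qed
    show "\<forall>d\<in>D. \<forall>d'\<in>D. d \<noteq> d' \<longrightarrow> d \<otimes>\<^bsub>Q\<^esub> inv\<^bsub>Q\<^esub> d' \<notin> \<rho> ` K"
    proof (intro ballI impI)
      fix d d' assume dd: "d \<in> D" "d' \<in> D" "d \<noteq> d'"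
      then obtain R R' where R: "R \<in> F" "d = \<rho> (rep R)" "R' \<in> F" "d' = \<rho> (rep R')" unfolding D_def by blast
      have "R \<noteq> R'" using R dd by blast
      have "d \<otimes>\<^bsub>Q\<^esub> inv\<^bsub>Q\<^esub> d' = \<rho> (rep R \<otimes> inv rep R')"
        using R repc group_hom.hom_mult[OF hom] group_hom.hom_inv[OF hom] by simp
      then show "d \<otimes>\<^bsub>Q\<^esub> inv\<^bsub>Q\<^esub> d' \<notin> \<rho> ` K" using sep'[OF R(1,3) \<open>R \<noteq> R'\<close>] by auto
    qed
  qed
  also have "\<rho> x = M #> x" by (simp add: \<rho>_def)
  finally have "enat (card F) \<le> quot_centraliser_card G (N i0) x"
    using qcc_enat[of G M x] finQ cardD unfolding Q_def M_def by simp
  also have "\<dots> \<le> (SUP i\<in>{1..}. quot_centraliser_card G (N i) x)"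
    using i0 by (intro SUP_upper) simp
  finally show "enat (card F) \<le> (SUP i\<in>{1..}. ecard (centraliser (G Mod N i) (N i #> x)))"
    unfolding quot_centraliser_card_def .
qed

end

locale haar_setting = chain_setting +
  fixes \<mu> :: "'a measure"
  assumes haar: "normalised_haar_measure G T \<mu>"
begin

lemma ps: "prob_space \<mu>" using haar by (simp add: normalised_haar_measure_def)
lemma sp: "space \<mu> = carrier G" using haar by (simp add: normalised_haar_measure_def)
lemma sets_eq: "sets \<mu> = borel_sets_of T" using haar by (simp add: normalised_haar_measure_def)
lemma linv: "g \<in> carrier G \<Longrightarrow> A \<in> sets \<mu> \<Longrightarrow> measure \<mu> (g <# A) = measure \<mu> A"
  using haar by (simp add: normalised_haar_measure_def)

lemma open_sets: "openin T U \<Longrightarrow> U \<in> sets \<mu>"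
  unfolding sets_eq borel_sets_of_def by (rule sigma_sets.Basic) simp

lemma closed_sets:
  assumes "closedin T C" shows "C \<in> sets \<mu>"
proof -
  have "topspace T - C \<in> sets \<mu>" using assms open_sets by (simp add: closedin_def)
  then have "topspace T - (topspace T - C) \<in> sets \<mu>"
    unfolding sets_eq borel_sets_of_def by (rule sigma_sets.Compl)
  moreover have "topspace T - (topspace T - C) = C" using assms closedin_subset by blast
  ultimately show ?thesis by simp
qed

lemma coset_measure:
  assumes L: "L \<lhd> G" "openin T L" and R: "R \<in> rcosets L"
  shows "measure \<mu> R = 1 / real (card (rcosets L))"
proof -
  interpret L: normal L G by (rule L(1))
  interpret P: prob_space \<mu> by (rule ps)
  have Lsets: "L \<in> sets \<mu>" using L(2) open_sets by blast
  have eq: "measure \<mu> R' = measure \<mu> L" if R'L: "R' \<in> rcosets L" for R'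
  proof -
    obtain g where g: "g \<in> carrier G" "R' = L #> g" using R'L by (auto simp: RCOSETS_def)
    then have "R' = g <# L" using L.coset_eq by blast
    then show ?thesis using linv[OF g(1) Lsets] by simp
  qed
  have fin: "finite (rcosets L)" by (rule finite_index[OF cpt L.subgroup_axioms L(2)])
  have cs: "\<And>R'. R' \<in> rcosets L \<Longrightarrow> R' \<in> sets \<mu>"
    using open_rcos[OF L.subgroup_axioms L(2)] open_sets by (auto simp: RCOSETS_def)
  have "1 = measure \<mu> (space \<mu>)" using P.prob_space by simp
  also have "\<dots> = measure \<mu> (\<Union>R'\<in>rcosets L. R')"
    using rcosets_part_G[OF L.subgroup_axioms] sp by simp
  also have "\<dots> = (\<Sum>R'\<in>rcosets L. measure \<mu> R')"
  proof (rule measure_finite_Union[OF fin])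
    show "(\<lambda>R'. R') ` (rcosets L) \<subseteq> sets \<mu>" using cs by blast
    show "disjoint_family_on (\<lambda>R'. R') (rcosets L)"
      using rcos_disjoint[OF L.subgroup_axioms] unfolding disjoint_family_on_def pairwise_def disjnt_def by blast
    show "\<And>i. emeasure \<mu> i \<noteq> \<infinity>" using P.emeasure_finite by simp
  qed
  also have "\<dots> = real (card (rcosets L)) * measure \<mu> L" using eq by simp
  finally have "real (card (rcosets L)) * measure \<mu> L = 1" by simp
  moreover have "real (card (rcosets L)) \<noteq> 0" using calculation by (metis mult_zero_left zero_neq_one)
  ultimately show ?thesis using eq[OF R] by (simp add: field_simps)
qed

end

context tgrp
begin

lemma conj_class_quot:
  assumes L: "L \<lhd> G" and x: "x \<in> carrier G"
  shows "conj_class (G Mod L) (L #> x) = {L #> (inv g \<otimes> x \<otimes> g) | g. g \<in> carrier G}"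
proof -
  interpret L: normal L G by (rule L)
  define \<rho> where "\<rho> a = L #> a" for a
  have hom: "group_hom G (G Mod L) \<rho>"
    unfolding group_hom_def group_hom_axioms_def \<rho>_def
    using L.r_coset_hom_Mod L.factorgroup_is_group is_group by blast
  have c: "carrier (G Mod L) = \<rho> ` carrier G" unfolding \<rho>_def by (simp add: carrier_FactGroup)
  have e: "inv\<^bsub>G Mod L\<^esub> (\<rho> g) \<otimes>\<^bsub>G Mod L\<^esub> \<rho> x \<otimes>\<^bsub>G Mod L\<^esub> \<rho> g = \<rho> (inv g \<otimes> x \<otimes> g)"
    if "g \<in> carrier G" for g
    using that x group_hom.hom_mult[OF hom] group_hom.hom_inv[OF hom] by simp
  show ?thesis
    unfolding conj_class_def c using e by (auto simp: \<rho>_def)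
qed

end

context haar_setting
begin

lemma E_measure:
  assumes L: "L \<lhd> G" "openin T L" and x: "x \<in> carrier G"
  shows "measure \<mu> (\<Union>(conj_class (G Mod L) (L #> x))) = 1 / real (card (centraliser (G Mod L) (L #> x)))"
proof -
  interpret L: normal L G by (rule L(1))
  interpret P: prob_space \<mu> by (rule ps)
  define Q where "Q = G Mod L"
  have gQ: "group Q" unfolding Q_def by (rule L.factorgroup_is_group)
  have cQ: "carrier Q = rcosets L" unfolding Q_def by (simp add: FactGroup_def)
  have finQ: "finite (carrier Q)" using finite_index[OF cpt L.subgroup_axioms L(2)] cQ by simp
  have uQ: "L #> x \<in> carrier Q" using cQ x by (simp add: rcosetsI L.subset)
  define cls where "cls = conj_class Q (L #> x)"
  have clsQ: "cls \<subseteq> carrier Q" unfolding cls_def conj_class_def using gQ uQ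
    by (auto intro!: monoid.m_closed[OF group.is_monoid[OF gQ]] group.inv_closed[OF gQ])
  have fincls: "finite cls" using clsQ finQ finite_subset by blast
  have uc: "L #> x \<in> cls"
  proof -
    interpret Q: group Q by (rule gQ)
    have "L #> x = inv\<^bsub>Q\<^esub> \<one>\<^bsub>Q\<^esub> \<otimes>\<^bsub>Q\<^esub> (L #> x) \<otimes>\<^bsub>Q\<^esub> \<one>\<^bsub>Q\<^esub>" using uQ by simp
    then show ?thesis unfolding cls_def conj_class_def using Q.one_closed by blast
  qed
  have cc: "card (carrier Q) = card cls * card (centraliser Q (L #> x))"
    unfolding cls_def by (rule class_card[OF gQ finQ uQ])
  have "card (centraliser Q (L #> x)) > 0"
  proof -
    have "L #> x \<in> centraliser Q (L #> x)" using uQ by (simp add: centraliser_def)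
    moreover have "finite (centraliser Q (L #> x))"
      using finQ by (rule finite_subset[rotated]) (auto simp: centraliser_def)
    ultimately show ?thesis using card_gt_0_iff by blast
  qed
  moreover have "card cls > 0" using uc fincls card_gt_0_iff by blast
  moreover have "measure \<mu> (\<Union>cls) = real (card cls) * (1 / real (card (carrier Q)))"
  proof -
    have "measure \<mu> (\<Union>R\<in>cls. R) = (\<Sum>R\<in>cls. measure \<mu> R)"
    proof (rule measure_finite_Union[OF fincls])
      show "(\<lambda>R. R) ` cls \<subseteq> sets \<mu>"
        using clsQ cQ open_rcos[OF L.subgroup_axioms L(2)] open_sets by (auto simp: RCOSETS_def)
      show "disjoint_family_on (\<lambda>R. R) cls"
        using rcos_disjoint[OF L.subgroup_axioms] clsQ cQ
        unfolding disjoint_family_on_def pairwise_def disjnt_def by blast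
      show "\<And>i. emeasure \<mu> i \<noteq> \<infinity>" using P.emeasure_finite by simp
    qed
    also have "\<dots> = (\<Sum>R\<in>cls. 1 / real (card (carrier Q)))"
      using coset_measure[OF L] clsQ cQ by (intro sum.cong) auto
    finally show ?thesis by simp
  qed
  ultimately have "measure \<mu> (\<Union>cls) = 1 / real (card (centraliser Q (L #> x)))"
    using cc by (simp add: field_simps)
  then show ?thesis unfolding cls_def Q_def .
qed

end

lemma seq_lemma:
  fixes b :: "nat \<Rightarrow> nat"
  assumes mono: "\<And>n. b n \<le> b (Suc n)" and pos: "\<And>n. b n > 0"
    and lim: "(\<lambda>n. 1 / real (b n)) \<longlonglongrightarrow> L"
  shows "L = (if (SUP n. enat (b n)) = \<infinity> then 0 else 1 / real (the_enat (SUP n. enat (b n))))"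
proof -
  have mono': "b m \<le> b n" if "m \<le> n" for m n using mono that by (rule incseqD[OF incseq_SucI])
  show ?thesis
  proof (cases "\<exists>B. \<forall>n. b n \<le> B")
    case True
    then obtain B where B: "\<And>n. b n \<le> B" by blast
    have "range b \<subseteq> {..B}" using B by auto
    then have finr: "finite (range b)" using finite_subset by blast
    define c where "c = Max (range b)"
    have "c \<in> range b" unfolding c_def using Max_in[OF finr] by blast
    then obtain n0 where n0: "b n0 = c" by blast
    have le: "b n \<le> c" for n unfolding c_def using finr by simp
    have ev: "b n = c" if "n \<ge> n0" for n using mono'[OF that] le[of n] n0 by simp
    have S: "(SUP n. enat (b n)) = enat c"
    proof (rule antisym)
      show "(SUP n. enat (b n)) \<le> enat c" using le by (intro SUP_least) simp
      show "enat c \<le> (SUP n. enat (b n))" unfolding n0[symmetric] by (rule SUP_upper) simp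
    qed
    have "(\<lambda>n. 1 / real (b n)) \<longlonglongrightarrow> 1 / real c"
    proof (rule Lim_transform_eventually[OF tendsto_const])
      show "\<forall>\<^sub>F n in sequentially. 1 / real c = 1 / real (b n)"
        unfolding eventually_sequentially using ev by metis
    qed
    then have "L = 1 / real c" using lim LIMSEQ_unique by blast
    then show ?thesis using S by simp
  next
    case False
    then have unb: "\<And>B. \<exists>n. b n > B" by (meson not_le)
    have S: "(SUP n. enat (b n)) = \<infinity>"
    proof (rule ccontr)
      assume "(SUP n. enat (b n)) \<noteq> \<infinity>"
      then obtain k where k: "(SUP n. enat (b n)) = enat k" by (cases "SUP n. enat (b n)") auto
      obtain n where "b n > k" using unb by blast
      moreover have "enat (b n) \<le> enat k" unfolding k[symmetric] by (rule SUP_upper) simp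
      ultimately show False by simp
    qed
    have "(\<lambda>n. 1 / real (b n)) \<longlonglongrightarrow> 0"
    proof (rule LIMSEQ_I)
      fix r :: real assume r: "r > 0"
      obtain n0 where n0: "b n0 > nat \<lceil>1 / r\<rceil>" using unb by blast
      have "norm (1 / real (b n) - 0) < r" if "n \<ge> n0" for n
      proof -
        have h1: "real (nat \<lceil>1 / r\<rceil>) \<ge> 1 / r" by (rule real_nat_ceiling_ge)
        have h2: "real (b n0) > real (nat \<lceil>1 / r\<rceil>)" using n0 by (simp only: of_nat_less_iff)
        have h3: "real (b n0) \<le> real (b n)" using mono'[OF that] by simp
        have "real (b n) > 1 / r" using h1 h2 h3 by linarith
        then have "1 < r * real (b n)" using r by (simp add: field_simps)
        moreover have "real (b n) > 0" using pos[of n] by simp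
        ultimately have "1 / real (b n) < r" by (simp add: divide_less_eq mult.commute)
        then show ?thesis using pos[of n] by simp
      qed
      then show "\<exists>no. \<forall>n\<ge>no. norm (1 / real (b n) - 0) < r" by blast
    qed
    then have "L = 0" using lim LIMSEQ_unique by blast
    then show ?thesis using S by simp
  qed
qed

context haar_setting
begin

lemma cent_pos:
  assumes L: "L \<lhd> G" "openin T L" and x: "x \<in> carrier G"
  shows "card (centraliser (G Mod L) (L #> x)) > 0"
proof -
  interpret L: normal L G by (rule L(1))
  have finQ: "finite (carrier (G Mod L))" by (rule quot_finite[OF cpt L])
  have uQ: "L #> x \<in> carrier (G Mod L)" using x by (simp add: FactGroup_def rcosetsI L.subset)
  have "L #> x \<in> centraliser (G Mod L) (L #> x)" using uQ by (simp add: centraliser_def)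
  moreover have "finite (centraliser (G Mod L) (L #> x))"
    using finQ by (rule finite_subset[rotated]) (auto simp: centraliser_def)
  ultimately show ?thesis using card_gt_0_iff by blast
qed

lemma conj_closed: "x \<in> carrier G \<Longrightarrow> closedin T (conj_class G x)"
proof -
  assume x: "x \<in> carrier G"
  have "conj_class G x = (\<lambda>g. inv g \<otimes> x \<otimes> g) ` topspace T"
    by (auto simp: conj_class_def top)
  moreover have "compactin T (topspace T)" using cpt compact_space_def by blast
  moreover have "compactin T ((\<lambda>g. inv g \<otimes> x \<otimes> g) ` topspace T)"
    by (rule image_compactin[OF calculation(2) cont_conj[OF x]])
  ultimately have "compactin T (conj_class G x)" by simp
  then show ?thesis using compactin_imp_closedin haus by blast
qed

definition EE :: "'a \<Rightarrow> nat \<Rightarrow> 'a set" where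
  "EE x i = \<Union>(conj_class (G Mod N i) (N i #> x))"

lemma EE_mem:
  assumes "i \<ge> 1" "x \<in> carrier G"
  shows "z \<in> EE x i \<longleftrightarrow> (\<exists>g\<in>carrier G. z \<in> N i #> (inv g \<otimes> x \<otimes> g))"
  unfolding EE_def conj_class_quot[OF Nn[OF assms(1)] assms(2)] by blast

lemma EE_open:
  assumes "i \<ge> 1" "x \<in> carrier G"
  shows "openin T (EE x i)"
  unfolding EE_def conj_class_quot[OF Nn[OF assms(1)] assms(2)]
  using open_rcos[OF Nsub[OF assms(1)] Nopen[OF assms(1)]] assms(2)
  by (intro openin_Union) auto

lemma EE_dec:
  assumes i: "i \<ge> 1" and x: "x \<in> carrier G"
  shows "EE x (Suc i) \<subseteq> EE x i"
proof
  fix z assume "z \<in> EE x (Suc i)"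
  then obtain g where g: "g \<in> carrier G" "z \<in> N (Suc i) #> (inv g \<otimes> x \<otimes> g)"
    using EE_mem[of "Suc i" x z] x i by auto
  then have "z \<in> N i #> (inv g \<otimes> x \<otimes> g)" using r_coset_mono[OF Ndec[OF i]] by blast
  then show "z \<in> EE x i" using EE_mem[OF i x] g(1) by blast
qed

lemma EE_lim:
  assumes x: "x \<in> carrier G"
  shows "(\<lambda>n. measure \<mu> (EE x (Suc n))) \<longlonglongrightarrow> measure \<mu> (conj_class G x)"
proof -
  interpret P: prob_space \<mu> by (rule ps)
  have "(\<lambda>n. measure \<mu> (EE x (Suc n))) \<longlonglongrightarrow> measure \<mu> (\<Inter>n. EE x (Suc n))"
  proof (rule P.finite_Lim_measure_decseq)
    have "EE x (Suc n) \<in> sets \<mu>" for n by (rule open_sets[OF EE_open[OF _ x]]) simp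
    then show "range (\<lambda>n. EE x (Suc n)) \<subseteq> sets \<mu>" by blast
    show "decseq (\<lambda>n. EE x (Suc n))"
    proof (rule decseq_SucI)
      fix n
      show "EE x (Suc (Suc n)) \<subseteq> EE x (Suc n)" by (rule EE_dec[OF _ x]) simp
    qed
  qed
  moreover have "(\<Inter>n. EE x (Suc n)) = conj_class G x"
  proof
    show "conj_class G x \<subseteq> (\<Inter>n. EE x (Suc n))"
    proof
      fix c assume "c \<in> conj_class G x"
      then obtain g where g: "g \<in> carrier G" "c = inv g \<otimes> x \<otimes> g" by (auto simp: conj_class_def)
      have cc: "c \<in> carrier G" using g x by simp
      have "c \<in> EE x (Suc n)" for n
      proof -
        have n1: "Suc n \<ge> 1" by simp
        have "c \<in> N (Suc n) #> c" by (rule rcos_self[OF cc Nsub[OF n1]])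
        then show ?thesis using EE_mem[OF n1 x, of c] g by blast
      qed
      then show "c \<in> (\<Inter>n. EE x (Suc n))" by blast
    qed
    show "(\<Inter>n. EE x (Suc n)) \<subseteq> conj_class G x"
    proof
      fix z assume z: "z \<in> (\<Inter>n. EE x (Suc n))"
      have zc: "z \<in> carrier G"
      proof -
        have "z \<in> EE x (Suc 0)" using z by blast
        then have "z \<in> EE x 1" by simp
        then obtain g where g: "g \<in> carrier G" "z \<in> N 1 #> (inv g \<otimes> x \<otimes> g)"
          using EE_mem[OF order_refl x, of z] by blast
        have "inv g \<otimes> x \<otimes> g \<in> carrier G" using g x by simp
        then show ?thesis using subgroup.elemrcos_carrier[OF Nsub[OF order_refl] is_group _ g(2)] by blast
      qed
      show "z \<in> conj_class G x"
      proof (rule key[OF conj_closed[OF x] zc])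
        fix i :: nat assume i: "i \<ge> 1"
        have ii: "i = Suc (i - 1)" using i by simp
        have "z \<in> EE x (Suc (i - 1))" using z by blast
        then have "z \<in> EE x i" by (simp only: ii[symmetric])
        then obtain g where g: "g \<in> carrier G" "z \<in> N i #> (inv g \<otimes> x \<otimes> g)"
          using EE_mem[OF i x] by blast
        define c where "c = inv g \<otimes> x \<otimes> g"
        have cc: "c \<in> carrier G" unfolding c_def using g x by simp
        have "z \<in> N i #> c" using g(2) unfolding c_def .
        then have "z \<otimes> inv c \<in> N i" by (rule subgroup.rcos_module_imp[OF Nsub[OF i] is_group cc])
        then have "inv (z \<otimes> inv c) \<in> N i" by (rule subgroup.m_inv_closed[OF Nsub[OF i]])
        then have "c \<otimes> inv z \<in> N i" using cc zc by (simp add: inv_mult_group)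
        then have "c \<in> N i #> z" using subgroup.rcos_module_rev[OF Nsub[OF i] is_group zc cc] by blast
        moreover have "c \<in> conj_class G x" unfolding c_def conj_class_def using g by blast
        ultimately show "(N i #> z) \<inter> conj_class G x \<noteq> {}" by blast
      qed
    qed
  qed
  ultimately show ?thesis by simp
qed

lemma measure_part:
  assumes x: "x \<in> carrier G"
  shows "measure \<mu> (conj_class G x) =
    (if (SUP i\<in>{1..}. quot_centraliser_card G (N i) x) = \<infinity> then 0
     else 1 / real (the_enat (SUP i\<in>{1..}. quot_centraliser_card G (N i) x)))"
proof -
  interpret P: prob_space \<mu> by (rule ps)
  define b where "b n = card (centraliser (G Mod N (Suc n)) (N (Suc n) #> x))" for n
  have meas: "measure \<mu> (EE x (Suc n)) = 1 / real (b n)" for n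
    unfolding EE_def b_def by (rule E_measure[OF Nn Nopen x]) simp_all
  have pos: "b n > 0" for n unfolding b_def by (rule cent_pos[OF Nn Nopen x]) simp_all
  have mono: "b n \<le> b (Suc n)" for n
  proof -
    have "EE x (Suc (Suc n)) \<subseteq> EE x (Suc n)" by (rule EE_dec[OF _ x]) simp
    then have "measure \<mu> (EE x (Suc (Suc n))) \<le> measure \<mu> (EE x (Suc n))"
      using EE_open x open_sets by (intro P.finite_measure_mono) auto
    then have "1 / real (b (Suc n)) \<le> 1 / real (b n)" using meas by simp
    then show ?thesis using pos[of n] pos[of "Suc n"] by (simp add: divide_simps)
  qed
  have lim: "(\<lambda>n. 1 / real (b n)) \<longlonglongrightarrow> measure \<mu> (conj_class G x)"
    using EE_lim[OF x] meas by simp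
  have qe: "quot_centraliser_card G (N (Suc n)) x = enat (b n)" for n
    unfolding b_def by (rule qcc_enat[OF quot_finite[OF cpt Nn Nopen]]) simp_all
  have "{1::nat..} = range Suc"
    using greaterThan_0 atLeast_Suc_greaterThan[of 0] by simp
  then have "(SUP i\<in>{1..}. quot_centraliser_card G (N i) x) = (SUP n. enat (b n))"
    using qe by (simp add: image_image)
  then show ?thesis using seq_lemma[OF mono pos lim] by simp
qed

end

theorem proposition5p1:
  fixes G :: "('a, 'b) monoid_scheme" and T :: "'a topology" and M :: "'a measure"
    and x :: 'a and N :: "nat \<Rightarrow> 'a set"
  assumes "profinite_group G T"
    and "second_countable T"
    and "normalised_haar_measure G T M"
    and "x \<in> carrier G"
    and "\<And>i. i \<ge> 1 \<Longrightarrow> N i \<lhd> G \<and> openin T (N i)"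
    and "\<And>i. i \<ge> 1 \<Longrightarrow> N (Suc i) \<subseteq> N i"
    and "(\<Inter>i\<in>{1..}. N i) = {\<one>\<^bsub>G\<^esub>}"
  shows "let c1 = (SUP i\<in>{1..}. quot_centraliser_card G (N i) x);
             c2 = (SUP K\<in>{K. K \<lhd> G \<and> openin T K}. quot_centraliser_card G K x);
             c3 = (SUP K\<in>{K. K \<lhd> G \<and> closedin T K}. quot_centraliser_card G K x)
         in c1 = c2 \<and> c2 = c3 \<and>
            measure M (conj_class G x) = (if c1 = \<infinity> then 0 else 1 / real (the_enat c1))"
proof -
  have tg: "tgrp G T" using assms(1) by (rule profinite_tgrp)
  interpret haar_setting G T N M
  proof (rule haar_setting.intro[OF chain_setting.intro[OF tg]])
    show "chain_setting_axioms G T N"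
      unfolding chain_setting_axioms_def
      using assms(1,5,6,7) by (auto simp: profinite_group_def)
    show "haar_setting_axioms G T M"
      unfolding haar_setting_axioms_def using assms(3) .
  qed
  define c1 where "c1 = (SUP i\<in>{1..}. quot_centraliser_card G (N i) x)"
  define c2 where "c2 = (SUP K\<in>{K. K \<lhd> G \<and> openin T K}. quot_centraliser_card G K x)"
  define c3 where "c3 = (SUP K\<in>{K. K \<lhd> G \<and> closedin T K}. quot_centraliser_card G K x)"
  have "c1 \<le> c2" unfolding c1_def c2_def
  proof (rule SUP_least)
    fix i :: nat assume "i \<in> {1..}"
    then have "N i \<in> {K. K \<lhd> G \<and> openin T K}" using assms(5) by auto
    then show "quot_centraliser_card G (N i) x \<le> (SUP K\<in>{K. K \<lhd> G \<and> openin T K}. quot_centraliser_card G K x)"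
      by (rule SUP_upper)
  qed
  moreover have "c2 \<le> c3" unfolding c2_def c3_def
  proof (rule SUP_least)
    fix K assume "K \<in> {K. K \<lhd> G \<and> openin T K}"
    then have "K \<in> {K. K \<lhd> G \<and> closedin T K}"
      using open_subgroup_closed normal_imp_subgroup by blast
    then show "quot_centraliser_card G K x \<le> (SUP K\<in>{K. K \<lhd> G \<and> closedin T K}. quot_centraliser_card G K x)"
      by (rule SUP_upper)
  qed
  moreover have "c3 \<le> c1" unfolding c3_def c1_def
    using c3_le[OF _ _ assms(4)] by (intro SUP_least) blast
  ultimately have "c1 = c2" "c2 = c3" by (auto intro: antisym order_trans)
  moreover have "measure M (conj_class G x) = (if c1 = \<infinity> then 0 else 1 / real (the_enat c1))"
    unfolding c1_def by (rule measure_part[OF assms(4)])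
  ultimately show ?thesis unfolding c1_def c2_def c3_def Let_def by blast
qed

end
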